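(* Let $p\in\{3,4,\dots\}$, $a\ge0$, $b>0$ satisfy either ($a>0$ and $b\in[p/2-1,p/2]$) or ($a=0$ and $b\in[p/2-1,p/2)$). Let $y>0$, $N\sim\mathrm{Poisson}(y/2)$ (expectations $E[\cdot\mid y]$ are with respect to this law), and $k\in\{1,2,3\}$. (1) If $a=0$, then $$\frac{E[w_k(N)\mid y]}{E[w_{k-1}(N)\mid y]}=\frac p2+k-b-1+\frac y2+\frac{y(k-b-1)}{2}\frac{E[w_{k-1}(N)/(N+p/2)\mid y]}{E[w_{k-1}(N)\mid y]}.$$ (2) If $a>0$, then $$\frac{E[w_k(N)\mid y]}{E[w_{k-1}(N)\mid y]}=\frac p2+k-b-1+\frac y2+\frac{y(k-b-1)}{2}\frac{E[w_{k-1}(N)/(N+p/2)\mid y]}{E[w_{k-1}(N)\mid y]}+\frac y2\frac{E[\phi(N+k-1)w_{k-1}(N)/(N+p/2)\mid y]}{E[w_{k-1}(N)\mid y]}+\frac{E[\phi(N+k-1)w_{k-1}(N)\mid y]}{E[w_{k-1}(N)\mid y]}.$$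
   Context: $g_0(z)=(a+z)^{-b}$; for $n\in\mathbb{Z}^+=\{0,1,2,\dots\}$ and $k\in\{0,1,2,3\}$, $w_k(n)=\int_0^\infty\frac{g_0(z)(z/2)^{n+p/2+k-1}e^{-z/2}}{2\Gamma(n+p/2)}dz$. For $a>0$, $\phi:\mathbb{Z}^+\to(0,\infty)$ is $\phi(n)=\frac{\int_0^\infty\frac{ab}{a+z}g_0(z)(z/2)^{n+p/2-1}e^{-z/2}dz}{\int_0^\infty g_0(z)(z/2)^{n+p/2-1}e^{-z/2}dz}$. *)

theory Defs
  imports "HOL-Probability.Probability"
begin

definition g0 :: "real \<Rightarrow> real \<Rightarrow> real \<Rightarrow> real" where
  "g0 a b z = (a + z) powr (- b)"

definition w :: "real \<Rightarrow> real \<Rightarrow> nat \<Rightarrow> nat \<Rightarrow> nat \<Rightarrow> real" where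
  "w a b p k n = (LBINT z:{0<..}.
      g0 a b z * (z / 2) powr (real n + real p / 2 + real k - 1) * exp (- z / 2)
      / (2 * Gamma (real n + real p / 2)))"

definition phi :: "real \<Rightarrow> real \<Rightarrow> nat \<Rightarrow> nat \<Rightarrow> real" where
  "phi a b p n =
     (LBINT z:{0<..}. a * b / (a + z) * g0 a b z * (z / 2) powr (real n + real p / 2 - 1) * exp (- z / 2))
   / (LBINT z:{0<..}. g0 a b z * (z / 2) powr (real n + real p / 2 - 1) * exp (- z / 2))"

definition Ey :: "real \<Rightarrow> (nat \<Rightarrow> real) \<Rightarrow> real" where
  "Ey y f = measure_pmf.expectation (poisson_pmf (y / 2)) f"

end

theory Submission
  imports Defs "HOL-Real_Asymp.Real_Asymp"
begin


lemma gamma_int_lborel: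
  assumes x: "x > (0::real)"
  shows "integrable lborel (\<lambda>t. indicator {0<..} t * (t powr (x - 1) / exp t))"
proof (rule integrableI_nonneg)
  show "(\<lambda>t. indicator {0<..} t * (t powr (x - 1) / exp t)) \<in> borel_measurable lborel" by measurable
  show "AE t in lborel. 0 \<le> indicator {0<..} t * (t powr (x - 1) / exp t)" by auto
  have "(\<integral>\<^sup>+t. ennreal (indicator {0<..} t * (t powr (x - 1) / exp t)) \<partial>lborel)
       \<le> (\<integral>\<^sup>+t. ennreal (indicator {0..} t * t powr (x - 1) / exp t) \<partial>lborel)"
    by (intro nn_integral_mono) (auto simp: indicator_def)
  also have "\<dots> = Gamma x" using Gamma_conv_nn_integral_real[OF x] by simp
  finally show "(\<integral>\<^sup>+t. ennreal (indicator {0<..} t * (t powr (x - 1) / exp t)) \<partial>lborel) < \<infinity>"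
    by (simp add: le_less_trans)
qed

lemma gamma_half_int:
  assumes x: "x > (0::real)"
  shows "set_integrable lborel {0<..} (\<lambda>z. (z/2) powr (x - 1) * exp (- z / 2))"
proof -
  have "integrable lborel (\<lambda>z. indicator {0<..} (0 + (1/2) * z) * (((0 + (1/2) * z)) powr (x - 1) / exp (0 + (1/2) * z)))"
    by (rule lborel_integrable_real_affine[OF gamma_int_lborel[OF x]]) simp
  moreover have "(\<lambda>z. indicator {0<..} (0 + (1/2) * z) * (((0 + (1/2) * z)) powr (x - 1) / exp (0 + (1/2) * z)))
     = (\<lambda>z. indicator {0<..} z *\<^sub>R ((z/2) powr (x - 1) * exp (- z / 2)))"
    by (auto simp: indicator_def exp_minus field_simps fun_eq_iff)
  ultimately show ?thesis unfolding set_integrable_def by simp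
qed


definition Ig :: "real \<Rightarrow> real \<Rightarrow> real \<Rightarrow> real" where
  "Ig a b t = (LBINT z:{0<..}. g0 a b z * (z / 2) powr (t - 1) * exp (- z / 2))"

definition Kf :: "real \<Rightarrow> real \<Rightarrow> real \<Rightarrow> real" where
  "Kf a b t = (LBINT z:{0<..}. a * b / (a + z) * g0 a b z * (z / 2) powr (t - 1) * exp (- z / 2))"

lemma int_i1:
  assumes a: "a \<ge> 0" and b: "b > 0" and t: "t > 0" and c: "a > 0 \<or> t > b"
  shows "set_integrable lborel {0<..} (\<lambda>z. g0 a b z * (z / 2) powr (t - 1) * exp (- z / 2))"
proof (cases "a > 0")
  case True
  show ?thesis
  proof (rule set_integrable_bound[OF set_integrable_mult_right[OF gamma_half_int[OF t], of "a powr (-b)"]])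
    show "set_borel_measurable lborel {0<..} (\<lambda>z. g0 a b z * (z / 2) powr (t - 1) * exp (- z / 2))"
      unfolding set_borel_measurable_def g0_def by measurable
    have "norm (g0 a b z * (z / 2) powr (t - 1) * exp (- z / 2))
        \<le> norm (a powr - b * ((z / 2) powr (t - 1) * exp (- z / 2)))" if z: "z > 0" for z
    proof -
      have "g0 a b z \<le> a powr - b" unfolding g0_def
        using True z b by (intro powr_mono2') auto
      moreover have "g0 a b z \<ge> 0" unfolding g0_def by simp
      ultimately have "g0 a b z * ((z / 2) powr (t - 1) * exp (- z / 2))
          \<le> a powr - b * ((z / 2) powr (t - 1) * exp (- z / 2))"
        by (intro mult_right_mono) auto
      with \<open>g0 a b z \<ge> 0\<close> show ?thesis
        by (simp add: abs_mult mult.assoc)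
    qed
    then show "AE z in lborel. z \<in> {0<..} \<longrightarrow> norm (g0 a b z * (z / 2) powr (t - 1) * exp (- z / 2))
        \<le> norm (a powr - b * ((z / 2) powr (t - 1) * exp (- z / 2)))" by auto
  qed
next
  case False
  with a c have a0: "a = 0" and tb: "t > b" by auto
  have eq: "g0 a b z * (z / 2) powr (t - 1) * exp (- z / 2) = 2 powr (-b) * ((z / 2) powr ((t - b) - 1) * exp (- z / 2))"
    if z: "z \<in> {0<..}" for z
  proof -
    have "z powr (-b) = (2 * (z/2)) powr (-b)" by simp
    also have "\<dots> = 2 powr (-b) * (z/2) powr (-b)" by (subst powr_mult) (use z in auto)
    finally have "z powr (-b) * (z / 2) powr (t - 1) = 2 powr (-b) * (z / 2) powr ((t - b) - 1)"
      using z by (simp add: powr_add[symmetric] algebra_simps)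
    then show ?thesis using a0 unfolding g0_def by (simp add: algebra_simps)
  qed
  have "set_integrable lborel {0<..} (\<lambda>z. 2 powr (-b) * ((z / 2) powr ((t - b) - 1) * exp (- z / 2)))"
    using gamma_half_int[of "t - b"] tb by (intro set_integrable_mult_right) auto
  then show ?thesis
    by (subst set_integrable_cong[OF refl refl eq])
qed

lemma int_k:
  assumes a: "a \<ge> 0" and b: "b > 0" and t: "t > 0" and c: "a > 0 \<or> t > b"
  shows "set_integrable lborel {0<..} (\<lambda>z. a * b / (a + z) * g0 a b z * (z / 2) powr (t - 1) * exp (- z / 2))"
proof (rule set_integrable_bound[OF set_integrable_mult_right[OF int_i1[OF assms], of b]])
  show "set_borel_measurable lborel {0<..} (\<lambda>z. a * b / (a + z) * g0 a b z * (z / 2) powr (t - 1) * exp (- z / 2))"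
    unfolding set_borel_measurable_def g0_def by measurable
  have "norm (a * b / (a + z) * g0 a b z * (z / 2) powr (t - 1) * exp (- z / 2))
        \<le> norm (b * (g0 a b z * (z / 2) powr (t - 1) * exp (- z / 2)))" if z: "z > 0" for z
  proof -
    define X where "X = g0 a b z * (z / 2) powr (t - 1) * exp (- z / 2)"
    have X: "X \<ge> 0" unfolding X_def g0_def by simp
    have q1: "a * b / (a + z) \<le> b" using a b z by (simp add: field_simps)
    have q2: "0 \<le> a * b / (a + z)" using a b z by simp
    have "(a * b / (a + z)) * X \<le> b * X" using q1 X by (rule mult_right_mono)
    moreover have "0 \<le> (a * b / (a + z)) * X" using q2 X by (rule mult_nonneg_nonneg)
    moreover have "a * b / (a + z) * g0 a b z * (z / 2) powr (t - 1) * exp (- z / 2) = (a * b / (a + z)) * X"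
      unfolding X_def by (simp only: mult.assoc)
    ultimately show ?thesis using X b unfolding X_def by (simp del: times_divide_eq_left times_divide_eq_right)
  qed
  then show "AE z in lborel. z \<in> {0<..} \<longrightarrow> norm (a * b / (a + z) * g0 a b z * (z / 2) powr (t - 1) * exp (- z / 2))
        \<le> norm (b * (g0 a b z * (z / 2) powr (t - 1) * exp (- z / 2)))" by auto
qed


lemma deriv_F:
  assumes a: "a \<ge> 0" and x: "x > 0"
  shows "((\<lambda>z. g0 a b z * (z / 2) powr t * exp (- z / 2)) has_real_derivative
     ((t - b) * (g0 a b x * (x / 2) powr (t - 1) * exp (- x / 2))
       - g0 a b x * (x / 2) powr t * exp (- x / 2)
       + a * b / (a + x) * g0 a b x * (x / 2) powr (t - 1) * exp (- x / 2)) / 2) (at x)"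
proof -
  have ax: "a + x > 0" using a x by simp
  have D: "((\<lambda>z. (a + z) powr (-b) * (z / 2) powr t * exp (- z / 2)) has_real_derivative
     (- b * (a + x) powr (- b - 1) * (x / 2) powr t * exp (- x / 2)
      + (a + x) powr (-b) * (t * (x / 2) powr (t - 1) / 2) * exp (- x / 2)
      - (a + x) powr (-b) * (x / 2) powr t * exp (- x / 2) / 2)) (at x)"
    using ax x by (auto intro!: derivative_eq_intros simp: field_simps)
  have e1: "(a + x) powr (- b - 1) = (a + x) powr (-b) / (a + x)"
    using ax by (simp add: powr_diff)
  have e2: "(x / 2) powr t = (x / 2) powr (t - 1) * (x / 2)"
    using powr_add[of "x/2" "t-1" 1] x by simp
  have alg: "- b * (A / (a + x)) * (P * (x / 2)) * E + A * (t * P / 2) * E - A * (P * (x / 2)) * E / 2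
     = ((t - b) * (A * P * E) - A * (P * (x / 2)) * E + a * b / (a + x) * A * P * E) / 2"
    for A P E :: real
    using ax by (simp add: field_simps)
  show ?thesis unfolding g0_def
    using D unfolding e1 e2 alg .
qed


lemma ibp:
  assumes a: "a \<ge> 0" and b: "b > 0" and t: "t > 0" and c: "a > 0 \<or> t > b"
  shows "Ig a b (t + 1) = (t - b) * Ig a b t + Kf a b t"
proof -
  define i1 where "i1 = (\<lambda>z. g0 a b z * (z / 2) powr (t - 1) * exp (- z / 2))"
  define i2 where "i2 = (\<lambda>z. g0 a b z * (z / 2) powr t * exp (- z / 2))"
  define kk where "kk = (\<lambda>z. a * b / (a + z) * g0 a b z * (z / 2) powr (t - 1) * exp (- z / 2))"
  define f where "f = (\<lambda>z. ((t - b) * i1 z - i2 z + kk z) / 2)"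
  have I1: "set_integrable lborel {0<..} i1" unfolding i1_def by (rule int_i1[OF a b t c])
  have I2: "set_integrable lborel {0<..} i2" using int_i1[of a b "t+1"] a b t c unfolding i2_def by auto
  have K: "set_integrable lborel {0<..} kk" unfolding kk_def by (rule int_k[OF a b t c])
  have I1': "set_integrable lborel {0<..} (\<lambda>z. (t - b) * i1 z)" using I1 by simp
  have If: "set_integrable lborel {0<..} f" unfolding f_def
    using I1' I2 K by (intro set_integrable_divide set_integral_add(1) set_integral_diff(1))
  have "(LBINT x=ereal 0..\<infinity>. f x) = 0 - 0"
  proof (rule interval_integral_FTC_integrable[where F = i2])
    show "ereal 0 < \<infinity>" by simp
    fix x assume "ereal 0 < ereal x" "ereal x < \<infinity>"
    then have x: "x > 0" by simp
    show "(i2 has_vector_derivative f x) (at x)"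
      using deriv_F[OF a x, of b t] unfolding has_real_derivative_iff_has_vector_derivative i2_def f_def i1_def kk_def
      by simp
    show "isCont f x" unfolding f_def i1_def i2_def kk_def g0_def using x a
      by (auto intro!: continuous_intros)
  next
    show "set_integrable lborel (einterval (ereal 0) \<infinity>) f" using If by simp
    show "((i2 \<circ> real_of_ereal) \<longlongrightarrow> 0) (at_right (ereal 0))"
      unfolding ereal_tendsto_simps i2_def g0_def
    proof (cases "a > 0")
      case True
      then show "((\<lambda>z. (a + z) powr - b * (z / 2) powr t * exp (- z / 2)) \<longlongrightarrow> 0) (at_right 0)"
        using b t by real_asymp
    next
      case False
      with a c have "a = 0" "t > b" by auto
      then show "((\<lambda>z. (a + z) powr - b * (z / 2) powr t * exp (- z / 2)) \<longlongrightarrow> 0) (at_right 0)"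
        using b t by simp real_asymp
    qed
    show "((i2 \<circ> real_of_ereal) \<longlongrightarrow> 0) (at_left \<infinity>)"
      unfolding ereal_tendsto_simps i2_def g0_def
      using a b t by real_asymp
  qed
  then have "(LBINT x:{0<..}. f x) = 0" by (simp add: interval_integral_Ioi)
  also have "(LBINT x:{0<..}. f x) = ((t - b) * (LBINT x:{0<..}. i1 x) - (LBINT x:{0<..}. i2 x) + (LBINT x:{0<..}. kk x)) / 2"
    unfolding f_def using I1 I1' I2 K
    by (simp add: set_integral_add(2) set_integral_diff(2) set_integral_diff(1))
  finally have "(LBINT x:{0<..}. i2 x) = (t - b) * (LBINT x:{0<..}. i1 x) + (LBINT x:{0<..}. kk x)"
    by simp
  then show ?thesis unfolding Ig_def Kf_def i1_def i2_def kk_def by simp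
qed


lemma Ig_pos:
  assumes a: "a \<ge> 0" and b: "b > 0" and t: "t > 0" and c: "a > 0 \<or> t > b"
  shows "Ig a b t > 0"
proof -
  define i1 where "i1 = (\<lambda>z. g0 a b z * (z / 2) powr (t - 1) * exp (- z / 2))"
  have I1: "set_integrable lborel {0<..} i1" unfolding i1_def by (rule int_i1[OF a b t c])
  have pos: "i1 z > 0" if "z > 0" for z unfolding i1_def g0_def using that a by simp
  have ge: "Ig a b t \<ge> 0" unfolding Ig_def set_lebesgue_integral_def
    using pos[folded i1_def] unfolding i1_def
    by (intro integral_nonneg_AE AE_I2) (auto simp: indicator_def less_imp_le)
  have "Ig a b t \<noteq> 0"
  proof
    assume 0: "Ig a b t = 0"
    have h1: "integrable lborel (\<lambda>x. indicator {0<..} x * i1 x)"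
      using I1 unfolding set_integrable_def by simp
    have h2: "{0::real<..} \<in> sets lborel" by simp
    have h3: "AE x\<in>{0<..} in lborel. 0 < indicat_real {0<..} x * i1 x" using pos by auto
    have "(LINT x:{0<..}|lborel. indicat_real {0<..} x * i1 x) = (LINT x:{0<..}|lborel. i1 x)"
      by (intro set_lebesgue_integral_cong) auto
    also have "\<dots> = 0" using 0 unfolding Ig_def i1_def .
    finally have h4: "(LINT x:{0<..}|lborel. indicat_real {0<..} x * i1 x) = 0" .
    have "{0::real<..} \<in> null_sets lborel"
      by (rule null_if_pos_func_has_zero_int[OF h1 h2 h3 h4])
    then have "{0<..(1::real)} \<in> null_sets lborel"
      by (rule null_sets_subset) auto
    then show False by auto
  qed
  with ge show ?thesis by simp
qed

lemma Kf_bounds: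
  assumes a: "a \<ge> 0" and b: "b > 0" and t: "t > 0" and c: "a > 0 \<or> t > b"
  shows "0 \<le> Kf a b t" "Kf a b t \<le> b * Ig a b t"
proof -
  show "0 \<le> Kf a b t" unfolding Kf_def set_lebesgue_integral_def g0_def
    using a b by (intro integral_nonneg_AE AE_I2) (auto simp: indicator_def)
  have "Kf a b t \<le> (LBINT z:{0<..}. b * (g0 a b z * (z / 2) powr (t - 1) * exp (- z / 2)))"
    unfolding Kf_def
  proof (rule set_integral_mono)
    show "set_integrable lborel {0<..} (\<lambda>z. a * b / (a + z) * g0 a b z * (z / 2) powr (t - 1) * exp (- z / 2))"
      by (rule int_k[OF assms])
    show "set_integrable lborel {0<..} (\<lambda>z. b * (g0 a b z * (z / 2) powr (t - 1) * exp (- z / 2)))"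
      using int_i1[OF assms] by simp
    fix z :: real assume "z \<in> {0<..}"
    then have z: "z > 0" by simp
    define X where "X = g0 a b z * (z / 2) powr (t - 1) * exp (- z / 2)"
    have X: "X \<ge> 0" unfolding X_def g0_def by simp
    have q1: "a * b / (a + z) \<le> b" using a b z by (simp add: field_simps)
    have "(a * b / (a + z)) * X \<le> b * X" using q1 X by (rule mult_right_mono)
    then show "a * b / (a + z) * g0 a b z * (z / 2) powr (t - 1) * exp (- z / 2) \<le> b * (g0 a b z * (z / 2) powr (t - 1) * exp (- z / 2))"
      unfolding X_def by (simp only: mult.assoc)
  qed
  then show "Kf a b t \<le> b * Ig a b t" unfolding Ig_def by simp
qed


lemma w_Ig: "w a b p k n = Ig a b (real n + real p / 2 + real k) / (2 * Gamma (real n + real p / 2))"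
  unfolding w_def Ig_def by simp

lemma phi_eq: "phi a b p m = Kf a b (real m + real p / 2) / Ig a b (real m + real p / 2)"
  unfolding phi_def Kf_def Ig_def by simp



lemma pmf_nat_integrable:
  fixes p :: "nat pmf" and f :: "nat \<Rightarrow> real"
  assumes "summable (\<lambda>n. pmf p n * \<bar>f n\<bar>)"
  shows "integrable (measure_pmf p) f"
proof -
  have "integrable (count_space UNIV) (\<lambda>n. pmf p n *\<^sub>R f n)"
    unfolding integrable_count_space_nat_iff using assms by (simp add: abs_mult)
  then show ?thesis unfolding measure_pmf_eq_density
    by (subst integrable_density) auto
qed

lemma pmf_nat_sums:
  fixes p :: "nat pmf" and f :: "nat \<Rightarrow> real"
  assumes "integrable (measure_pmf p) f"
  shows "(\<lambda>n. pmf p n * f n) sums measure_pmf.expectation p f"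
proof -
  have i: "integrable (count_space UNIV) (\<lambda>n. pmf p n *\<^sub>R f n)"
    using assms unfolding measure_pmf_eq_density by (subst (asm) integrable_density) auto
  have "measure_pmf.expectation p f = integral\<^sup>L (count_space UNIV) (\<lambda>n. pmf p n *\<^sub>R f n)"
    unfolding measure_pmf_eq_density by (subst integral_density) auto
  with sums_integral_count_space_nat[OF i] show ?thesis by simp
qed

lemma pois_int:
  fixes f :: "nat \<Rightarrow> real"
  assumes r: "r > 0" and B: "B \<ge> 0" and bd: "\<And>n. \<bar>f n\<bar> \<le> M * B ^ n"
  shows "integrable (measure_pmf (poisson_pmf r)) f"
proof (rule pmf_nat_integrable)
  have s: "summable (\<lambda>n. (r * B) ^ n /\<^sub>R fact n)" by (rule summable_exp_generic)
  have "summable (\<lambda>n. (M * exp (-r)) * ((r * B) ^ n /\<^sub>R fact n))"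
    by (rule summable_mult[OF s])
  then show "summable (\<lambda>n. pmf (poisson_pmf r) n * \<bar>f n\<bar>)"
  proof (rule summable_comparison_test')
    fix n :: nat
    have "r ^ n / fact n * exp (- r) * \<bar>f n\<bar> \<le> r ^ n / fact n * exp (- r) * (M * B ^ n)"
      using r by (intro mult_left_mono bd) auto
    also have "\<dots> = (M * exp (-r)) * ((r * B) ^ n /\<^sub>R fact n)"
      by (simp add: power_mult_distrib field_simps)
    finally show "norm (pmf (poisson_pmf r) n * \<bar>f n\<bar>) \<le> (M * exp (-r)) * ((r * B) ^ n /\<^sub>R fact n)"
      using r by simp
  qed
qed

lemma pois_shift:
  fixes f :: "nat \<Rightarrow> real"
  assumes r: "r > 0" and B: "B \<ge> 1" and bd: "\<And>n. \<bar>f n\<bar> \<le> M * B ^ n"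
  shows "measure_pmf.expectation (poisson_pmf r) (\<lambda>n. real n * f n)
       = r * measure_pmf.expectation (poisson_pmf r) (\<lambda>n. f (Suc n))"
proof -
  have M: "M \<ge> 0" using bd[of 0] by simp
  have i1: "integrable (measure_pmf (poisson_pmf r)) (\<lambda>n. real n * f n)"
  proof (rule pois_int[OF r, of "2 * B" _ M])
    fix n
    have "real n \<le> 2 ^ n" using less_exp[of n] by (metis of_nat_le_iff of_nat_numeral of_nat_power less_imp_le)
    then have "\<bar>real n * f n\<bar> \<le> 2 ^ n * (M * B ^ n)"
      using bd[of n] by (simp add: abs_mult mult_mono)
    then show "\<bar>real n * f n\<bar> \<le> M * (2 * B) ^ n" by (simp add: power_mult_distrib field_simps)
  qed (use B in auto)
  have i2: "integrable (measure_pmf (poisson_pmf r)) (\<lambda>n. f (Suc n))"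
  proof (rule pois_int[OF r, of B _ "M * B"])
    fix n show "\<bar>f (Suc n)\<bar> \<le> M * B * B ^ n" using bd[of "Suc n"] by (simp add: field_simps)
  qed (use B in auto)
  have s2: "(\<lambda>n. r * (pmf (poisson_pmf r) n * f (Suc n))) sums (r * measure_pmf.expectation (poisson_pmf r) (\<lambda>n. f (Suc n)))"
    using pmf_nat_sums[OF i2] by (rule sums_mult)
  have eq: "(\<lambda>n. pmf (poisson_pmf r) (Suc n) * (real (Suc n) * f (Suc n))) = (\<lambda>n. r * (pmf (poisson_pmf r) n * f (Suc n)))"
  proof
    fix n
    have fs: "(fact (Suc n) :: real) = real (Suc n) * fact n" by simp
    have pos: "real (Suc n) > 0" "(fact n :: real) > 0" by auto
    show "pmf (poisson_pmf r) (Suc n) * (real (Suc n) * f (Suc n)) = r * (pmf (poisson_pmf r) n * f (Suc n))"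
      using r pos unfolding pmf_poisson[OF r] fs by (simp add: field_simps del: of_nat_Suc)
  qed
  have "(\<lambda>n. pmf (poisson_pmf r) n * (real n * f n)) sums (r * measure_pmf.expectation (poisson_pmf r) (\<lambda>n. f (Suc n)))"
    using s2 unfolding eq[symmetric] by (subst (asm) sums_Suc_iff) simp
  with pmf_nat_sums[OF i1] show ?thesis using sums_unique2 by blast
qed

locale hyp =
  fixes a b :: real and p :: nat
  assumes a: "a \<ge> 0" and b: "b > 0" and bp: "b \<le> real p / 2"
    and ab: "a > 0 \<or> b < real p / 2" and p: "p \<ge> 3"
begin

lemma cond: assumes "t \<ge> real p / 2" shows "t > 0" "a > 0 \<or> t > b"
  using assms b bp ab p by auto

lemma w_pos: "w a b p j n > 0"
proof -
  have "Ig a b (real n + real p / 2 + real j) > 0"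
    using cond[of "real n + real p / 2 + real j"] by (intro Ig_pos a b) auto
  moreover have "Gamma (real n + real p / 2) > 0" using p by (intro Gamma_real_pos) auto
  ultimately show ?thesis unfolding w_Ig by simp
qed

lemma phi_bounds: "0 \<le> phi a b p m" "phi a b p m \<le> b"
proof -
  have c: "real m + real p / 2 > 0" "a > 0 \<or> real m + real p / 2 > b"
    using cond[of "real m + real p / 2"] by auto
  have I: "Ig a b (real m + real p / 2) > 0" using Ig_pos[OF a b c] .
  note K = Kf_bounds[OF a b c]
  show "0 \<le> phi a b p m" unfolding phi_eq using I K by simp
  show "phi a b p m \<le> b" unfolding phi_eq using I K by (simp add: divide_le_eq)
qed

lemma w_rec:
  assumes k: "k \<ge> 1"
  shows "w a b p k n = (real n + real p / 2 + real k - 1 - b + phi a b p (n + k - 1)) * w a b p (k - 1) n"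
proof -
  define t where "t = real n + real p / 2 + real k - 1"
  have c: "t > 0" "a > 0 \<or> t > b" using cond[of t] k unfolding t_def by auto
  have I: "Ig a b t > 0" using Ig_pos[OF a b c] .
  have e1: "real n + real p / 2 + real k = t + 1" unfolding t_def by simp
  have e2: "real n + real p / 2 + real (k - 1) = t" unfolding t_def using k by (simp add: of_nat_diff)
  have e3: "real (n + k - 1) + real p / 2 = t" unfolding t_def using k by (simp add: of_nat_diff)
  have G: "Gamma (real n + real p / 2) > 0" using p by (intro Gamma_real_pos) auto
  show ?thesis unfolding w_Ig phi_eq e1 e2 e3 ibp[OF a b c]
    using I G by (simp add: field_simps)
qed

lemma w_shift: "w a b p j (Suc n) = w a b p (Suc j) n / (real n + real p / 2)"
proof -
  have pos: "real n + real p / 2 > 0" using p by simp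
  have G: "Gamma (real (Suc n) + real p / 2) = (real n + real p / 2) * Gamma (real n + real p / 2)"
  proof -
    have "real n + real p / 2 \<notin> \<int>\<^sub>\<le>\<^sub>0" using pos by (auto elim!: nonpos_Ints_cases)
    then show ?thesis using Gamma_plus1[of "real n + real p / 2"] by (simp add: add_ac)
  qed
  have e: "real (Suc n) + real p / 2 + real j = real n + real p / 2 + real (Suc j)" by simp
  have G0: "Gamma (real n + real p / 2) > 0" using p by (intro Gamma_real_pos) auto
  show ?thesis unfolding w_Ig G e by (simp add: divide_divide_eq_left ac_simps)
qed

lemma w_growth: "w a b p j (Suc n) \<le> (1 + real j) * w a b p j n"
proof -
  have pos: "real n + real p / 2 \<ge> 1" using p by simp
  have wp: "w a b p j n > 0" by (rule w_pos)
  have "w a b p (Suc j) n = (real n + real p / 2 + real j - b + phi a b p (n + j)) * w a b p j n"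
    using w_rec[of "Suc j" n] by simp
  also have "\<dots> \<le> (real n + real p / 2 + real j) * w a b p j n"
    using phi_bounds(2)[of "n + j"] wp by (intro mult_right_mono) auto
  also have "\<dots> \<le> ((1 + real j) * (real n + real p / 2)) * w a b p j n"
  proof (rule mult_right_mono)
    have "real j * 1 \<le> real j * (real n + real p / 2)" using pos by (intro mult_left_mono) auto
    then show "real n + real p / 2 + real j \<le> (1 + real j) * (real n + real p / 2)"
      by (simp add: distrib_right)
  qed (use wp in auto)
  finally have le: "w a b p (Suc j) n \<le> ((1 + real j) * w a b p j n) * (real n + real p / 2)"
    by (simp only: ac_simps)
  have "w a b p (Suc j) n / (real n + real p / 2) \<le> (1 + real j) * w a b p j n"
    using le pos by (subst pos_divide_le_eq) auto
  then show ?thesis unfolding w_shift .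
qed

lemma w_bound: "w a b p j n \<le> w a b p j 0 * (1 + real j) ^ n"
proof (induction n)
  case (Suc n)
  have "w a b p j (Suc n) \<le> (1 + real j) * w a b p j n" by (rule w_growth)
  also have "\<dots> \<le> (1 + real j) * (w a b p j 0 * (1 + real j) ^ n)"
    using Suc by (intro mult_left_mono) auto
  finally show ?case by (simp add: algebra_simps)
qed simp


lemma main_formula:
  assumes y: "y > 0" and k: "k \<ge> 1"
  shows "Ey y (w a b p k) / Ey y (w a b p (k - 1)) =
        real p / 2 + real k - b - 1 + y / 2
        + y * (real k - b - 1) / 2
          * (Ey y (\<lambda>n. w a b p (k - 1) n / (real n + real p / 2)) / Ey y (w a b p (k - 1)))
        + y / 2 * (Ey y (\<lambda>n. phi a b p (n + k - 1) * w a b p (k - 1) n / (real n + real p / 2))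
                    / Ey y (w a b p (k - 1)))
        + Ey y (\<lambda>n. phi a b p (n + k - 1) * w a b p (k - 1) n) / Ey y (w a b p (k - 1))"
proof -
  define r where "r = y / 2"
  have r: "r > 0" using y by (simp add: r_def)
  define W where "W = w a b p (k - 1)"
  define F where "F = (\<lambda>n. phi a b p (n + k - 1))"
  define q where "q = (\<lambda>n::nat. real n + real p / 2)"
  define c0 where "c0 = real p / 2 + real k - 1 - b"
  define E where "E = (\<lambda>f::nat \<Rightarrow> real. measure_pmf.expectation (poisson_pmf r) f)"
  have Ey: "Ey y f = E f" for f unfolding Ey_def E_def r_def ..
  have q: "q n \<ge> 1" for n unfolding q_def using p by simp
  have Wpos: "W n > 0" for n unfolding W_def by (rule w_pos)
  have Fb: "0 \<le> F n" "F n \<le> b" for n unfolding F_def using phi_bounds by auto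
  have Wb: "W n \<le> W 0 * real k ^ n" for n
    using w_bound[of "k - 1" n] k unfolding W_def by (simp add: of_nat_diff)
  have B: "w a b p k n = real n * W n + c0 * W n + F n * W n" for n
    using w_rec[OF k, of n] unfolding W_def F_def c0_def by (simp add: algebra_simps)
  have A: "W (Suc n) = W n + (real k - 1 - b) * (W n / q n) + F n * W n / q n" for n
  proof -
    have "W (Suc n) = w a b p k n / q n"
      using w_shift[of "k - 1" n] k unfolding W_def q_def by simp
    also have "\<dots> = (q n + (real k - 1 - b) + F n) * W n / q n"
      using w_rec[OF k, of n] unfolding W_def F_def q_def by (simp add: algebra_simps)
    also have "\<dots> = W n + (real k - 1 - b) * (W n / q n) + F n * W n / q n"
      using q[of n] by (simp add: field_simps)
    finally show ?thesis .
  qed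
  have kk: "real k \<ge> 1" using k by simp
  have W0: "W 0 \<ge> 0" using Wpos[of 0] by simp
  have iW: "integrable (measure_pmf (poisson_pmf r)) W"
    by (rule pois_int[OF r, of "real k" _ "W 0"]) (use Wb Wpos in \<open>auto simp: less_imp_le\<close>)
  have iWq: "integrable (measure_pmf (poisson_pmf r)) (\<lambda>n. W n / q n)"
  proof (rule pois_int[OF r, of "real k" _ "W 0"])
    fix n
    have "W n / q n \<le> W n" using q[of n] Wpos[of n] by (simp add: divide_le_eq mult_le_cancel_left1 less_imp_le)
    then show "\<bar>W n / q n\<bar> \<le> W 0 * real k ^ n" using Wb[of n] Wpos[of n] q[of n] by simp
  qed (use kk in auto)
  have iFW: "integrable (measure_pmf (poisson_pmf r)) (\<lambda>n. F n * W n)"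
  proof (rule pois_int[OF r, of "real k" _ "b * W 0"])
    fix n
    have "F n * W n \<le> b * W n" using Fb[of n] Wpos[of n] by (intro mult_right_mono) auto
    also have "\<dots> \<le> b * (W 0 * real k ^ n)" using Wb[of n] b by (intro mult_left_mono) auto
    finally show "\<bar>F n * W n\<bar> \<le> b * W 0 * real k ^ n" using Fb[of n] Wpos[of n] by (simp add: ac_simps)
  qed (use kk in auto)
  have iFWq: "integrable (measure_pmf (poisson_pmf r)) (\<lambda>n. F n * W n / q n)"
  proof (rule pois_int[OF r, of "real k" _ "b * W 0"])
    fix n
    have FW: "F n * W n \<ge> 0" using Fb(1)[of n] Wpos[of n] by simp
    have "F n * W n / q n \<le> F n * W n"
      using q[of n] FW by (simp add: divide_le_eq mult_le_cancel_left1)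
    also have "F n * W n \<le> b * W n" using Fb[of n] Wpos[of n] by (intro mult_right_mono) auto
    also have "\<dots> \<le> b * (W 0 * real k ^ n)" using Wb[of n] b by (intro mult_left_mono) auto
    finally show "\<bar>F n * W n / q n\<bar> \<le> b * W 0 * real k ^ n" using Fb[of n] Wpos[of n] q[of n] by (simp add: ac_simps)
  qed (use kk in auto)
  have inW: "integrable (measure_pmf (poisson_pmf r)) (\<lambda>n. real n * W n)"
  proof (rule pois_int[OF r, of "2 * real k" _ "W 0"])
    fix n
    have "real n \<le> 2 ^ n" using less_exp[of n] by (metis of_nat_le_iff of_nat_numeral of_nat_power less_imp_le)
    then have "real n * W n \<le> 2 ^ n * (W 0 * real k ^ n)"
      using Wb[of n] Wpos[of n] by (intro mult_mono) auto
    then show "\<bar>real n * W n\<bar> \<le> W 0 * (2 * real k) ^ n" using Wpos[of n]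
      by (simp add: power_mult_distrib ac_simps)
  qed (use kk in auto)
  have shift: "E (\<lambda>n. real n * W n) = r * E (\<lambda>n. W (Suc n))"
    unfolding E_def by (rule pois_shift[OF r kk, of W "W 0"]) (use Wb Wpos in \<open>auto simp: less_imp_le\<close>)
  have E1: "E (w a b p k) = E (\<lambda>n. real n * W n) + c0 * E W + E (\<lambda>n. F n * W n)"
    unfolding E_def B using inW iW iFW by simp
  have E2: "E (\<lambda>n. W (Suc n)) = E W + (real k - 1 - b) * E (\<lambda>n. W n / q n) + E (\<lambda>n. F n * W n / q n)"
  proof -
    let ?M = "measure_pmf (poisson_pmf r)"
    have i2: "integrable ?M (\<lambda>n. (real k - 1 - b) * (W n / q n))" using iWq by (rule integrable_mult_right)
    have i3: "integrable ?M (\<lambda>n. W n + (real k - 1 - b) * (W n / q n))" using iW i2 by (rule Bochner_Integration.integrable_add)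
    have "E (\<lambda>n. W (Suc n)) = integral\<^sup>L ?M (\<lambda>n. (W n + (real k - 1 - b) * (W n / q n)) + F n * W n / q n)"
      unfolding E_def A ..
    also have "\<dots> = integral\<^sup>L ?M (\<lambda>n. W n + (real k - 1 - b) * (W n / q n)) + integral\<^sup>L ?M (\<lambda>n. F n * W n / q n)"
      by (rule Bochner_Integration.integral_add[OF i3 iFWq])
    also have "integral\<^sup>L ?M (\<lambda>n. W n + (real k - 1 - b) * (W n / q n)) = integral\<^sup>L ?M W + integral\<^sup>L ?M (\<lambda>n. (real k - 1 - b) * (W n / q n))"
      by (rule Bochner_Integration.integral_add[OF iW i2])
    also have "integral\<^sup>L ?M (\<lambda>n. (real k - 1 - b) * (W n / q n)) = (real k - 1 - b) * integral\<^sup>L ?M (\<lambda>n. W n / q n)"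
      by (rule integral_mult_right_zero)
    finally show ?thesis unfolding E_def .
  qed
  have EWpos: "E W > 0"
  proof -
    have "(\<lambda>n. pmf (poisson_pmf r) n * W n) sums E W" unfolding E_def by (rule pmf_nat_sums[OF iW])
    moreover have "0 < (\<Sum>n. pmf (poisson_pmf r) n * W n)"
      using \<open>(\<lambda>n. pmf (poisson_pmf r) n * W n) sums E W\<close> r Wpos
      by (intro suminf_pos) (auto simp: sums_iff)
    ultimately show ?thesis by (simp add: sums_iff)
  qed
  have "E (w a b p k) = (c0 + r) * E W + r * (real k - 1 - b) * E (\<lambda>n. W n / q n)
          + r * E (\<lambda>n. F n * W n / q n) + E (\<lambda>n. F n * W n)"
    unfolding E1 shift E2 by (simp add: algebra_simps)
  moreover have g1: "Ey y (\<lambda>n. w a b p (k - 1) n / (real n + real p / 2)) = E (\<lambda>n. W n / q n)"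
    unfolding Ey W_def q_def ..
  moreover have g2: "Ey y (\<lambda>n. phi a b p (n + k - 1) * w a b p (k - 1) n / (real n + real p / 2)) = E (\<lambda>n. F n * W n / q n)"
    unfolding Ey W_def q_def F_def ..
  moreover have g3: "Ey y (\<lambda>n. phi a b p (n + k - 1) * w a b p (k - 1) n) = E (\<lambda>n. F n * W n)"
    unfolding Ey W_def F_def ..
  moreover have g4: "Ey y (w a b p (k - 1)) = E W" unfolding Ey W_def ..
  moreover have g5: "Ey y (w a b p k) = E (w a b p k)" unfolding Ey ..
  ultimately show ?thesis
    using EWpos y unfolding r_def c0_def by (simp add: field_simps)
qed

end

theorem propositionA4:
  fixes p :: nat and a b y :: real and k :: nat
  assumes hp: "p \<ge> 3"
    and hab: "(a > 0 \<and> real p / 2 - 1 \<le> b \<and> b \<le> real p / 2)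
              \<or> (a = 0 \<and> real p / 2 - 1 \<le> b \<and> b < real p / 2)"
    and hb: "b > 0"
    and hy: "y > 0"
    and hk: "k \<in> {1, 2, 3}"
  shows "(a = 0 \<longrightarrow>
      Ey y (w a b p k) / Ey y (w a b p (k - 1)) =
        real p / 2 + real k - b - 1 + y / 2
        + y * (real k - b - 1) / 2
          * (Ey y (\<lambda>n. w a b p (k - 1) n / (real n + real p / 2)) / Ey y (w a b p (k - 1))))
    \<and> (a > 0 \<longrightarrow>
      Ey y (w a b p k) / Ey y (w a b p (k - 1)) =
        real p / 2 + real k - b - 1 + y / 2
        + y * (real k - b - 1) / 2
          * (Ey y (\<lambda>n. w a b p (k - 1) n / (real n + real p / 2)) / Ey y (w a b p (k - 1)))
        + y / 2 * (Ey y (\<lambda>n. phi a b p (n + k - 1) * w a b p (k - 1) n / (real n + real p / 2))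
                    / Ey y (w a b p (k - 1)))
        + Ey y (\<lambda>n. phi a b p (n + k - 1) * w a b p (k - 1) n) / Ey y (w a b p (k - 1)))"
proof -
  have a: "a \<ge> 0" "b \<le> real p / 2" "a > 0 \<or> b < real p / 2" using hab by auto
  interpret hyp a b p using a hb hp by unfold_locales auto
  have k: "k \<ge> 1" using hk by auto
  note M = main_formula[OF hy k]
  have Ey0: "Ey y (\<lambda>n. 0) = 0" unfolding Ey_def by simp
  show ?thesis
  proof (intro conjI impI)
    assume a0: "a = 0"
    have phi0: "phi a b p m = 0" for m unfolding phi_def a0 by simp
    show "Ey y (w a b p k) / Ey y (w a b p (k - 1)) =
        real p / 2 + real k - b - 1 + y / 2
        + y * (real k - b - 1) / 2
          * (Ey y (\<lambda>n. w a b p (k - 1) n / (real n + real p / 2)) / Ey y (w a b p (k - 1)))"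
      using M unfolding phi0 by (simp add: Ey0)
  next
    assume "a > 0"
    show "Ey y (w a b p k) / Ey y (w a b p (k - 1)) =
        real p / 2 + real k - b - 1 + y / 2
        + y * (real k - b - 1) / 2
          * (Ey y (\<lambda>n. w a b p (k - 1) n / (real n + real p / 2)) / Ey y (w a b p (k - 1)))
        + y / 2 * (Ey y (\<lambda>n. phi a b p (n + k - 1) * w a b p (k - 1) n / (real n + real p / 2))
                    / Ey y (w a b p (k - 1)))
        + Ey y (\<lambda>n. phi a b p (n + k - 1) * w a b p (k - 1) n) / Ey y (w a b p (k - 1))"
      by (rule M)
  qed
qed

end
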